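(* For every approval-based participatory budgeting instance $I=(N,\mathcal{T},B,\mathrm{cost},\mathcal{A})$ and every nonempty $T\subseteq\mathcal{T}$, the proportionality degree of the sequential Phragmén rule satisfies \[ d_{\mathrm{Phrag}}(T)\;\ge\;\frac{1}{2}\left(\frac{\mathrm{cost}(T)}{\max_{t\in T}\mathrm{cost}(t)}-1\right). \]
   Context: An approval-based PB instance is $I=(N,\mathcal{T},B,\mathrm{cost},\mathcal{A})$: $N$ is a set of $n$ voters, $\mathcal{T}$ a finite set of projects, $B>0$ a budget, $\mathrm{cost}:\mathcal{T}\to\mathbb{R}_{>0}$, with $\mathrm{cost}(S)=\sum_{t\in S}\mathrm{cost}(t)$, and $A_i\subseteq\mathcal{T}$ the projects approved by voter $i$. For $T\subseteq\mathcal{T}$, $V\subseteq N$ is $T$-cohesive if $T\subseteq\bigcap_{i\in V}A_i$ and $\mathrm{cost}(T)/B\le|V|/n$; $\mathcal{V}(T)$ is the set of all $T$-cohesive groups. $\mathrm{avg}_W(V)=\frac{1}{|V|}\sum_{i\in V}|W\cap A_i|$. For a rule $f$, $d_f(T)=\sup\{g:\ \min_{V\in\mathcal{V}(T)}\mathrm{avg}_{f(I)}(V)\ge\min(|T|,g)\}$. Sequential Phragmén rule: start with an empty proposal $W$. Every voter earns credits continuously at rate one unit of credit per unit of time. At the first moment when some not-yet-selected project $p$ is such that the voters approving $p$ together hold $\mathrm{cost}(p)$ credits, $p$ is added to $W$ and the balances of all voters approving $p$ are reset to $0$ (other voters keep their credits); ties broken arbitrarily. The rule stops when the project it would select next would make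 the total cost of $W$ exceed $B$, and returns $W$. *)

theory Defs
  imports "HOL-Analysis.Analysis"
begin

definition pb_instance :: "'v set \<Rightarrow> 'p set \<Rightarrow> real \<Rightarrow> ('p \<Rightarrow> real) \<Rightarrow> ('v \<Rightarrow> 'p set) \<Rightarrow> bool" where
  "pb_instance N P B cost A \<longleftrightarrow> finite N \<and> N \<noteq> {} \<and> finite P \<and> B > 0 \<and>
     (\<forall>t\<in>P. cost t > 0) \<and> (\<forall>i\<in>N. A i \<subseteq> P)"

definition total_cost :: "('p \<Rightarrow> real) \<Rightarrow> 'p set \<Rightarrow> real" where
  "total_cost cost S = (\<Sum>t\<in>S. cost t)"

definition approvers :: "'v set \<Rightarrow> ('v \<Rightarrow> 'p set) \<Rightarrow> 'p \<Rightarrow> 'v set" where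
  "approvers N A p = {i\<in>N. p \<in> A i}"

definition cohesive :: "'v set \<Rightarrow> real \<Rightarrow> ('p \<Rightarrow> real) \<Rightarrow> ('v \<Rightarrow> 'p set) \<Rightarrow> 'p set \<Rightarrow> 'v set \<Rightarrow> bool" where
  "cohesive N B cost A T V \<longleftrightarrow> V \<subseteq> N \<and> (\<forall>i\<in>V. T \<subseteq> A i) \<and>
     total_cost cost T / B \<le> real (card V) / real (card N)"

definition avg_sat :: "('v \<Rightarrow> 'p set) \<Rightarrow> 'p set \<Rightarrow> 'v set \<Rightarrow> real" where
  "avg_sat A W V = (\<Sum>i\<in>V. real (card (W \<inter> A i))) / real (card V)"

definition prop_degree :: "'v set \<Rightarrow> real \<Rightarrow> ('p \<Rightarrow> real) \<Rightarrow> ('v \<Rightarrow> 'p set) \<Rightarrow> 'p set \<Rightarrow> 'p set \<Rightarrow> ereal" where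
  "prop_degree N B cost A W T =
     (SUP g\<in>{g::real. \<forall>V. cohesive N B cost A T V \<longrightarrow>
                 avg_sat A W V \<ge> min (real (card T)) g}. ereal g)"

text \<open>A state (W, b, t): selected projects W, voter balances b at time t.
  Project p (unselected, with at least one approver) becomes affordable at time
  phrag_time: the first t' \<ge> t with \<Sum> approvers (b i + (t' - t)) \<ge> cost p.\<close>
definition phrag_time :: "'v set \<Rightarrow> ('p \<Rightarrow> real) \<Rightarrow> ('v \<Rightarrow> 'p set) \<Rightarrow> ('v \<Rightarrow> real) \<Rightarrow> real \<Rightarrow> 'p \<Rightarrow> real" where
  "phrag_time N cost A b t p =
     t + max 0 ((cost p - (\<Sum>i\<in>approvers N A p. b i)) / real (card (approvers N A p)))"

definition phrag_candidate :: "'v set \<Rightarrow> 'p set \<Rightarrow> ('v \<Rightarrow> 'p set) \<Rightarrow> 'p set \<Rightarrow> 'p \<Rightarrow> bool" where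
  "phrag_candidate N P A W p \<longleftrightarrow> p \<in> P \<and> p \<notin> W \<and> approvers N A p \<noteq> {}"

definition phrag_next :: "'v set \<Rightarrow> 'p set \<Rightarrow> ('p \<Rightarrow> real) \<Rightarrow> ('v \<Rightarrow> 'p set) \<Rightarrow> 'p set \<Rightarrow> ('v \<Rightarrow> real) \<Rightarrow> real \<Rightarrow> 'p \<Rightarrow> bool" where
  "phrag_next N P cost A W b t p \<longleftrightarrow> phrag_candidate N P A W p \<and>
     (\<forall>q. phrag_candidate N P A W q \<longrightarrow> phrag_time N cost A b t p \<le> phrag_time N cost A b t q)"

inductive phrag_reach :: "'v set \<Rightarrow> 'p set \<Rightarrow> real \<Rightarrow> ('p \<Rightarrow> real) \<Rightarrow> ('v \<Rightarrow> 'p set) \<Rightarrow>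
    'p set \<Rightarrow> ('v \<Rightarrow> real) \<Rightarrow> real \<Rightarrow> bool"
  for N P B cost A where
  init: "phrag_reach N P B cost A {} (\<lambda>_. 0) 0"
| step: "phrag_reach N P B cost A W b t \<Longrightarrow> phrag_next N P cost A W b t p \<Longrightarrow>
         total_cost cost (insert p W) \<le> B \<Longrightarrow>
         t' = phrag_time N cost A b t p \<Longrightarrow>
         phrag_reach N P B cost A (insert p W)
           (\<lambda>i. if p \<in> A i then 0 else b i + (t' - t)) t'"

text \<open>W is a possible output of sequential Phragmen (for some tie-breaking): a reachable state
  at which the next selected project would exceed the budget, or no project can ever be selected.\<close>
definition phragmen_outcome :: "'v set \<Rightarrow> 'p set \<Rightarrow> real \<Rightarrow> ('p \<Rightarrow> real) \<Rightarrow> ('v \<Rightarrow> 'p set) \<Rightarrow> 'p set \<Rightarrow> bool" where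
  "phragmen_outcome N P B cost A W \<longleftrightarrow> (\<exists>b t. phrag_reach N P B cost A W b t \<and>
     ((\<exists>p. phrag_next N P cost A W b t p \<and> total_cost cost (insert p W) > B) \<or>
      (\<forall>q. \<not> phrag_candidate N P A W q)))"

end

theory Submission
  imports Defs
begin
definition DD :: "real \<Rightarrow> real \<Rightarrow> real \<Rightarrow> real" where
  "DD v c t = v * t^2 - v * (max 0 (t - c/v))^2"

lemma DD_step:
  assumes v: "v > 0" and d: "0 \<le> d" and F0: "0 \<le> F" and F1: "F \<le> v * t" and F2: "F + v * d \<le> c"
  shows "2 * d * F + v * d^2 \<le> DD v c (t+d) - DD v c t"
proof -
  define a where "a = c / v"
  define f where "f = F / v"
  have c: "c = v * a" using v by (simp add: a_def)
  have FF: "F = v * f" using v by (simp add: f_def)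
  have f1: "f \<le> t" using F1 v FF by (metis mult_le_cancel_left_pos)
  have f2: "f + d \<le> a" using F2 v unfolding c FF by (metis distrib_left mult_le_cancel_left_pos)
  have key: "2 * d * f + d^2 \<le> ((t+d)^2 - (max 0 (t+d-a))^2) - (t^2 - (max 0 (t-a))^2)"
  proof (cases "t + d \<le> a")
    case True
    then have "max 0 (t+d-a) = 0" "max 0 (t-a) = 0" using d by auto
    have "d*f \<le> d*t" using mult_left_mono[OF f1 d] .
    then show ?thesis using \<open>max 0 (t+d-a) = 0\<close> \<open>max 0 (t-a) = 0\<close> by (simp add: power2_eq_square algebra_simps)
  next
    case False
    show ?thesis
    proof (cases "t \<ge> a")
      case True
      then have "max 0 (t+d-a) = t+d-a" "max 0 (t-a) = t-a" using d by auto
      have "d*(f+d) \<le> d*a" using mult_left_mono[OF f2 d] .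
      moreover have "0 \<le> d*d" by simp
      moreover have "((t+d)^2 - (max 0 (t+d-a))^2) - (t^2 - (max 0 (t-a))^2) = 2*a*d"
        by (simp only: \<open>max 0 (t+d-a) = t+d-a\<close> \<open>max 0 (t-a) = t-a\<close>) (simp add: power2_eq_square algebra_simps)
      moreover have "2*d*f + d^2 = 2*(d*(f+d)) - d*d" by (simp add: power2_eq_square algebra_simps)
      moreover have "2*a*d = 2*(d*a)" by simp
      ultimately show ?thesis by linarith
    next
      case False2: False
      then have "max 0 (t+d-a) = t+d-a" "max 0 (t-a) = 0" using False by auto
      have h1: "d*(f+d) \<le> d*a" using mult_left_mono[OF f2 d] .
      have h2: "(t+d-a)*(t+d-a) \<le> (2*d)*(t+d-a)" apply (rule mult_right_mono) using False False2 d by auto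
      show ?thesis using \<open>max 0 (t+d-a) = t+d-a\<close> \<open>max 0 (t-a) = 0\<close> h1 h2 by (simp add: power2_eq_square algebra_simps)
    qed
  qed
  have "2 * d * F + v * d^2 = v * (2 * d * f + d^2)" by (simp add: FF algebra_simps)
  also have "\<dots> \<le> v * (((t+d)^2 - (max 0 (t+d-a))^2) - (t^2 - (max 0 (t-a))^2))"
    using key v by simp
  also have "\<dots> = DD v c (t+d) - DD v c t" by (simp add: DD_def a_def algebra_simps)
  finally show ?thesis .
qed

lemma sum_shift: "finite Q \<Longrightarrow> (\<Sum>i\<in>Q. b i + d) = (\<Sum>i\<in>Q. b i) + real (card Q) * (d::real)"
  by (simp add: sum.distrib)

lemma time_le:
  assumes "finite Q" "Q \<noteq> {}" "(\<Sum>i\<in>Q. b i) \<le> c" "0 \<le> d"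
    "d \<le> max 0 ((c - (\<Sum>i\<in>Q. b i)) / real (card Q))"
  shows "(\<Sum>i\<in>Q. b i + d) \<le> (c::real)"
proof -
  have k: "real (card Q) > 0" using assms(1,2) by (simp add: card_gt_0_iff)
  have "max 0 ((c - (\<Sum>i\<in>Q. b i)) / real (card Q)) = (c - (\<Sum>i\<in>Q. b i)) / real (card Q)"
    using assms(3) k by simp
  then have "real (card Q) * d \<le> c - (\<Sum>i\<in>Q. b i)" using assms(5) k by (simp add: le_divide_eq mult.commute)
  then show ?thesis using sum_shift[OF assms(1)] by simp
qed

lemma time_eq:
  assumes "finite Q" "Q \<noteq> {}" "(\<Sum>i\<in>Q. b i) \<le> c"
  shows "(\<Sum>i\<in>Q. b i + max 0 ((c - (\<Sum>i\<in>Q. b i)) / real (card Q))) = (c::real)"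
proof -
  have k: "real (card Q) > 0" using assms(1,2) by (simp add: card_gt_0_iff)
  have "max 0 ((c - (\<Sum>i\<in>Q. b i)) / real (card Q)) = (c - (\<Sum>i\<in>Q. b i)) / real (card Q)"
    using assms(3) k by simp
  then show ?thesis using sum_shift[OF assms(1)] k by simp
qed

lemma inv_basic:
  assumes pb: "pb_instance N P B cost A" and r: "phrag_reach N P B cost A W b t"
  shows "W \<subseteq> P \<and> 0 \<le> t \<and> (\<forall>i. 0 \<le> b i \<and> b i \<le> t) \<and> (\<forall>i. W \<inter> A i = {} \<longrightarrow> b i = t) \<and>
    (\<forall>q. phrag_candidate N P A W q \<longrightarrow> (\<Sum>i\<in>approvers N A q. b i) \<le> cost q) \<and>
    (\<Sum>i\<in>N. b i) = real (card N) * t - total_cost cost W"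
  using r
proof induction
  case init
  then show ?case using pb by (auto simp: pb_instance_def phrag_candidate_def total_cost_def less_imp_le)
next
  case (step W b t p t')
  have fN: "finite N" "finite P" using pb by (auto simp: pb_instance_def)
  have IH: "W \<subseteq> P" "0 \<le> t" "\<And>i. 0 \<le> b i" "\<And>i. b i \<le> t" "\<And>i. W \<inter> A i = {} \<Longrightarrow> b i = t"
    "\<And>q. phrag_candidate N P A W q \<Longrightarrow> (\<Sum>i\<in>approvers N A q. b i) \<le> cost q"
    "(\<Sum>i\<in>N. b i) = real (card N) * t - total_cost cost W" using step.IH by auto
  have cand: "phrag_candidate N P A W p" and mn: "\<And>q. phrag_candidate N P A W q \<Longrightarrow>
     phrag_time N cost A b t p \<le> phrag_time N cost A b t q" using step.hyps(2) by (auto simp: phrag_next_def)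
  have pP: "p \<in> P" "p \<notin> W" "approvers N A p \<noteq> {}" using cand by (auto simp: phrag_candidate_def)
  define Q where "Q = approvers N A p"
  have fQ: "finite Q" "Q \<subseteq> N" using fN by (auto simp: Q_def approvers_def)
  define d where "d = t' - t"
  have dd: "d = max 0 ((cost p - (\<Sum>i\<in>Q. b i)) / real (card Q))"
    using step.hyps(4) by (simp add: d_def phrag_time_def Q_def)
  have d0: "0 \<le> d" using dd by simp
  have t': "t' = t + d" by (simp add: d_def)
  define b' where "b' = (\<lambda>i. if p \<in> A i then 0 else b i + (t' - t))"
  have b'd: "b' i = (if p \<in> A i then 0 else b i + d)" for i by (simp add: b'_def d_def)
  have c1: "insert p W \<subseteq> P" using IH(1) pP by auto
  have c2: "0 \<le> t'" using IH(2) d0 t' by simp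
  have c3: "\<forall>i. 0 \<le> b' i \<and> b' i \<le> t'" using IH(3,4) d0 t' IH(2) by (auto simp: b'd)
  have c4: "\<forall>i. insert p W \<inter> A i = {} \<longrightarrow> b' i = t'" using IH(5) t' by (auto simp: b'd)
  have c5: "\<forall>q. phrag_candidate N P A (insert p W) q \<longrightarrow> (\<Sum>i\<in>approvers N A q. b' i) \<le> cost q"
  proof (intro allI impI)
    fix q assume qc: "phrag_candidate N P A (insert p W) q"
    then have qW: "phrag_candidate N P A W q" by (auto simp: phrag_candidate_def)
    have fq: "finite (approvers N A q)" using fN by (auto simp: approvers_def)
    have ne: "approvers N A q \<noteq> {}" using qc by (auto simp: phrag_candidate_def)
    have "t' \<le> phrag_time N cost A b t q" using mn[OF qW] step.hyps(4) by simp
    then have "d \<le> max 0 ((cost q - (\<Sum>i\<in>approvers N A q. b i)) / real (card (approvers N A q)))"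
      by (simp add: phrag_time_def t')
    then have "(\<Sum>i\<in>approvers N A q. b i + d) \<le> cost q"
      using time_le[OF fq ne IH(6)[OF qW] d0] by simp
    moreover have "(\<Sum>i\<in>approvers N A q. b' i) \<le> (\<Sum>i\<in>approvers N A q. b i + d)"
      by (rule sum_mono) (use IH(3) d0 in \<open>auto simp: b'd\<close>)
    ultimately show "(\<Sum>i\<in>approvers N A q. b' i) \<le> cost q" by linarith
  qed
  have payQ: "(\<Sum>i\<in>Q. b i + d) = cost p"
    unfolding dd by (rule time_eq) (use fQ pP IH(6)[OF cand] in \<open>auto simp: Q_def\<close>)
  have "(\<Sum>i\<in>N. b' i) = (\<Sum>i\<in>N - Q. b' i) + (\<Sum>i\<in>Q. b' i)"
    using fN fQ by (metis add.commute sum.subset_diff)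
  also have "(\<Sum>i\<in>Q. b' i) = 0" by (auto simp: b'd Q_def approvers_def)
  also have "(\<Sum>i\<in>N - Q. b' i) = (\<Sum>i\<in>N - Q. b i + d)"
    by (rule sum.cong) (auto simp: b'd Q_def approvers_def)
  also have "\<dots> = (\<Sum>i\<in>N. b i + d) - (\<Sum>i\<in>Q. b i + d)"
    using fN fQ by (simp add: sum_diff)
  also have "\<dots> = (\<Sum>i\<in>N. b i) + real (card N) * d - cost p"
    using payQ sum_shift[OF fN(1)] by simp
  also have "total_cost cost (insert p W) = cost p + total_cost cost W"
    using pP IH(1) fN by (simp add: total_cost_def finite_subset)
  ultimately have c6: "(\<Sum>i\<in>N. b' i) = real (card N) * t' - total_cost cost (insert p W)"
    using IH(7) t' by (simp add: algebra_simps)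
  show ?case using c1 c2 c3 c4 c5 c6 unfolding b'_def by blast
qed


definition phi :: "('v \<Rightarrow> 'p set) \<Rightarrow> 'p set \<Rightarrow> ('v \<Rightarrow> real) \<Rightarrow> real \<Rightarrow> 'v \<Rightarrow> real" where
  "phi A W b t i = (t - b i)^2 / real (card (W \<inter> A i)) + (b i)^2"

lemma cs_ineq:
  fixes s u w :: real
  assumes "s > 0"
  shows "(u+w)^2/(s+1) \<le> u^2/s + w^2"
proof -
  have "(u+w)^2 * s \<le> (u^2 + s*w^2)*(s+1)"
    using zero_le_power2[of "u - s*w"] by (simp add: power2_eq_square algebra_simps)
  then have "(u+w)^2 \<le> ((u^2 + s*w^2)*(s+1))/s"
    using assms by (simp add: le_divide_eq)
  also have "\<dots> = (u^2/s + w^2)*(s+1)" using assms by (simp add: field_simps)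
  finally show ?thesis using assms by (simp add: divide_le_eq)
qed

lemma phi_advance:
  "phi A W (\<lambda>j. b j + d) (t + d) i = phi A W b t i + 2*d*b i + d^2"
  by (simp add: phi_def power2_eq_square algebra_simps)

lemma phi_step:
  assumes "finite W" "p \<notin> W" "W \<inter> A i = {} \<longrightarrow> b i = t"
  shows "phi A (insert p W) (\<lambda>j. if p \<in> A j then 0 else b j + d) (t + d) i \<le> phi A W b t i + 2*d*b i + d^2"
proof (cases "p \<in> A i")
  case False
  then have "insert p W \<inter> A i = W \<inter> A i" by auto
  then show ?thesis using False by (simp add: phi_def power2_eq_square algebra_simps)
next
  case True
  have fin: "finite (W \<inter> A i)" using assms(1) by simp
  have ins: "insert p W \<inter> A i = insert p (W \<inter> A i)" using True by auto
  have card: "card (insert p W \<inter> A i) = card (W \<inter> A i) + 1" unfolding ins using fin assms(2) by simp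
  define s where "s = real (card (W \<inter> A i))"
  have rhs: "phi A W b t i + 2*d*b i + d^2 = (t - b i)^2 / s + (b i + d)^2"
    by (simp add: phi_def s_def power2_eq_square algebra_simps)
  have lhs: "phi A (insert p W) (\<lambda>j. if p \<in> A j then 0 else b j + d) (t + d) i = (t+d)^2/(s+1)"
    using True card by (simp add: phi_def s_def)
  show ?thesis
  proof (cases "s = 0")
    case True
    then have "W \<inter> A i = {}" using fin by (simp add: s_def)
    then have "b i = t" using assms(3) by simp
    then show ?thesis unfolding lhs rhs using True by simp
  next
    case False
    then have "s > 0" by (simp add: s_def)
    from cs_ineq[OF this, of "t - b i" "b i + d"] show ?thesis unfolding lhs rhs by simp
  qed
qed

lemma inv_phi:
  assumes pb: "pb_instance N P B cost A" and V: "V \<subseteq> N" "V \<noteq> {}" "\<forall>i\<in>V. t0 \<in> A i" "t0 \<in> P"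
    and r: "phrag_reach N P B cost A W b t"
  shows "t0 \<notin> W \<longrightarrow> (\<Sum>i\<in>V. phi A W b t i) \<le> DD (real (card V)) (cost t0) t"
  using r
proof induction
  case init
  have "finite N" using pb by (simp add: pb_instance_def)
  then have "real (card V) > 0" using V by (simp add: card_gt_0_iff finite_subset)
  moreover have "cost t0 > 0" using pb V by (simp add: pb_instance_def)
  ultimately have "max 0 (0 - cost t0 / real (card V)) = 0" by simp
  then show ?case by (simp add: phi_def DD_def)
next
  case (step W b t p t')
  show ?case
  proof
    assume t0: "t0 \<notin> insert p W"
    have fN: "finite N" using pb by (simp add: pb_instance_def)
    have fV: "finite V" using fN V finite_subset by auto
    have v0: "real (card V) > 0" using fV V by (simp add: card_gt_0_iff)
    note Ib = inv_basic[OF pb step.hyps(1)]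
    have I1: "W \<subseteq> P" using Ib by (rule conjunct1)
    note Ib3 = Ib[THEN conjunct2, THEN conjunct2]
    have I3: "\<And>i. 0 \<le> b i" "\<And>i. b i \<le> t" using Ib3[THEN conjunct1] by auto
    note Ib4 = Ib3[THEN conjunct2]
    have I5: "\<And>i. W \<inter> A i = {} \<Longrightarrow> b i = t" using Ib4[THEN conjunct1] by auto
    have I6: "\<And>q. phrag_candidate N P A W q \<Longrightarrow> (\<Sum>i\<in>approvers N A q. b i) \<le> cost q"
      using Ib4[THEN conjunct2, THEN conjunct1] by auto
    note I = I1 I1 I3 I5 I6
    have fW: "finite W" using I(1) pb finite_subset by (auto simp: pb_instance_def)
    have IH: "(\<Sum>i\<in>V. phi A W b t i) \<le> DD (real (card V)) (cost t0) t" using step.IH t0 by simp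
    have cand: "phrag_candidate N P A W p" and mn: "\<And>q. phrag_candidate N P A W q \<Longrightarrow>
       phrag_time N cost A b t p \<le> phrag_time N cost A b t q" using step.hyps(2) by (auto simp: phrag_next_def)
    have pW: "p \<notin> W" using cand by (simp add: phrag_candidate_def)
    define d where "d = t' - t"
    have d0: "0 \<le> d" using step.hyps(4) by (simp add: d_def phrag_time_def)
    have t': "t' = t + d" by (simp add: d_def)
    have Vsub: "V \<subseteq> approvers N A t0" using V by (auto simp: approvers_def)
    have fa: "finite (approvers N A t0)" using fN by (simp add: approvers_def)
    have ane: "approvers N A t0 \<noteq> {}" using Vsub V by auto
    have c0: "phrag_candidate N P A W t0" using t0 V ane by (simp add: phrag_candidate_def)
    have "t' \<le> phrag_time N cost A b t t0" using mn[OF c0] step.hyps(4) by simp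
    then have "d \<le> max 0 ((cost t0 - (\<Sum>i\<in>approvers N A t0. b i)) / real (card (approvers N A t0)))"
      by (simp add: phrag_time_def t')
    then have "(\<Sum>i\<in>approvers N A t0. b i + d) \<le> cost t0"
      using time_le[OF fa ane I(6)[OF c0] d0] by simp
    moreover have "(\<Sum>i\<in>V. b i + d) \<le> (\<Sum>i\<in>approvers N A t0. b i + d)"
      by (rule sum_mono2[OF fa Vsub]) (use I(3) d0 in \<open>auto intro: add_nonneg_nonneg\<close>)
    ultimately have F2: "(\<Sum>i\<in>V. b i) + real (card V) * d \<le> cost t0"
      using sum_shift[OF fV] by simp
    have F0: "0 \<le> (\<Sum>i\<in>V. b i)" using I(3) by (simp add: sum_nonneg)
    have F1: "(\<Sum>i\<in>V. b i) \<le> real (card V) * t"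
      using sum_mono[of V b "\<lambda>_. t"] I(4) by simp
    have "(\<Sum>i\<in>V. phi A (insert p W) (\<lambda>j. if p \<in> A j then 0 else b j + d) (t + d) i)
        \<le> (\<Sum>i\<in>V. phi A W b t i + 2*d*b i + d^2)"
      by (rule sum_mono) (rule phi_step[OF fW pW], use I(5) in auto)
    also have "\<dots> = (\<Sum>i\<in>V. phi A W b t i) + (2*d*(\<Sum>i\<in>V. b i) + real (card V) * d^2)"
      by (simp add: sum.distrib sum_distrib_left)
    also have "\<dots> \<le> DD (real (card V)) (cost t0) t + (DD (real (card V)) (cost t0) (t+d) - DD (real (card V)) (cost t0) t)"
      using IH DD_step[OF v0 d0 F0 F1 F2] by linarith
    finally have X: "(\<Sum>i\<in>V. phi A (insert p W) (\<lambda>j. if p \<in> A j then 0 else b j + d) (t + d) i)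
        \<le> DD (real (card V)) (cost t0) (t+d)" by simp
    show "(\<Sum>i\<in>V. phi A (insert p W) (\<lambda>i. if p \<in> A i then 0 else b i + (t' - t)) t' i)
        \<le> DD (real (card V)) (cost t0) t'" unfolding d_def[symmetric] using X unfolding t'[symmetric] .
  qed
qed

lemma final_alg:
  fixes v c T G S :: real and s bb :: "'v \<Rightarrow> real"
  assumes v: "v > 0" and c: "c > 0" and fV: "finite V" and cv: "real (card V) = v"
    and T: "T \<ge> c / v"
    and s0: "\<And>i. i \<in> V \<Longrightarrow> s i \<ge> 0" and sb: "\<And>i. i \<in> V \<Longrightarrow> s i = 0 \<Longrightarrow> bb i = T"
    and G: "(\<Sum>i\<in>V. bb i) \<le> c"
    and H: "(\<Sum>i\<in>V. (T - bb i)^2 / s i + (bb i)^2) \<le> DD v c T"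
  shows "v * (v * T - c)/(2*c) \<le> (\<Sum>i\<in>V. s i)"
proof -
  define la where "la = 2*c/v"
  define mu where "mu = c/v"
  have per: "(T - bb i)^2 / s i + (bb i)^2 \<ge> 2*la*T - 2*la*bb i - la^2 * s i + 2*mu*bb i - mu^2" if "i \<in> V" for i
  proof -
    have m: "(bb i)^2 \<ge> 2*mu*bb i - mu^2" using zero_le_power2[of "bb i - mu"] by (simp add: power2_eq_square algebra_simps)
    show ?thesis
    proof (cases "s i = 0")
      case True
      then show ?thesis using m sb[OF that] by (simp add: algebra_simps)
    next
      case False
      then have sp: "s i > 0" using s0[OF that] by simp
      have "(T - bb i)^2 / s i - (2*la*(T - bb i) - la^2 * s i) = (T - bb i - la * s i)^2 / s i"
        using sp by (simp add: field_simps power2_eq_square)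
      also have "\<dots> \<ge> 0" using sp by simp
      finally show ?thesis using m by (simp add: algebra_simps)
    qed
  qed
  have "(\<Sum>i\<in>V. 2*la*T - 2*la*bb i - la^2 * s i + 2*mu*bb i - mu^2) \<le> (\<Sum>i\<in>V. (T - bb i)^2 / s i + (bb i)^2)"
    by (rule sum_mono) (use per in auto)
  also have "(\<Sum>i\<in>V. 2*la*T - 2*la*bb i - la^2 * s i + 2*mu*bb i - mu^2)
     = 2*la*(v * T) - 2*la*(\<Sum>i\<in>V. bb i) - la^2 * (\<Sum>i\<in>V. s i) + 2*mu*(\<Sum>i\<in>V. bb i) - v * mu^2"
    by (simp only: sum.distrib sum_subtractf sum_distrib_left[symmetric] sum_constant cv)
  finally have H2: "2*la*(v * T) - 2*la*(\<Sum>i\<in>V. bb i) - la^2 * (\<Sum>i\<in>V. s i) + 2*mu*(\<Sum>i\<in>V. bb i) - v * mu^2 \<le> DD v c T"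
    using H by linarith
  have mx: "max 0 (T - c/v) = T - c/v" using T by simp
  have DDv: "DD v c T = 2*c*T - c^2/v" unfolding DD_def mx using v by (simp add: power2_eq_square field_simps)
  define Sg where "Sg = (\<Sum>i\<in>V. bb i)"
  define SS where "SS = (\<Sum>i\<in>V. s i)"
  have H3: "4*c*T - 2*c*Sg/v - 4*c^2*SS/v^2 - c^2/v \<le> 2*c*T - c^2/v"
  proof -
    have E: "2*la*(v * T) - 2*la*Sg - la^2 * SS + 2*mu*Sg - v * mu^2 = 4*c*T - 2*c*Sg/v - 4*c^2*SS/v^2 - c^2/v"
      unfolding la_def mu_def using v by (simp add: field_simps power2_eq_square)
    show ?thesis using H2 E DDv unfolding Sg_def SS_def by linarith
  qed
  have "2*c*Sg/v \<le> 2*c*c/v" using G v c unfolding Sg_def by (simp add: divide_right_mono)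
  then have H4: "2*c*T - 2*c*c/v \<le> 4*c^2*SS/v^2" using H3 by linarith
  then have "(2*c*T - 2*c*c/v) * v^2 \<le> 4*c^2*SS" using v by (simp add: le_divide_eq)
  moreover have "(2*c*T - 2*c*c/v) * v^2 = 2*c*(v * (v * T - c))" using v by (simp add: power2_eq_square field_simps)
  moreover have "4*c^2*SS = 2*c*(2*c*SS)" by (simp add: power2_eq_square)
  ultimately have "2*c*(v * (v * T - c)) \<le> 2*c*(2*c*SS)" by simp
  moreover have "(0::real) < 2*c" using c by simp
  ultimately have "v * (v * T - c) \<le> 2*c*SS" using mult_le_cancel_left_pos by blast
  then have "v * (v * T - c) \<le> SS * (2*c)" by (simp add: algebra_simps)
  then have "v * (v * T - c) / (2*c) \<le> SS" using c by (simp add: divide_le_eq)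
  then show ?thesis unfolding SS_def .
qed


theorem theorem4:
  fixes N :: "'v set" and P :: "'p set" and B :: real and cost :: "'p \<Rightarrow> real"
    and A :: "'v \<Rightarrow> 'p set" and W T :: "'p set"
  assumes "pb_instance N P B cost A"
    and "phragmen_outcome N P B cost A W"
    and "T \<subseteq> P" and "T \<noteq> {}"
  shows "prop_degree N B cost A W T \<ge>
           ereal ((1/2) * (total_cost cost T / (MAX t\<in>T. cost t) - 1))"
proof -
  note pb = assms(1)
  have fN: "finite N" and fP: "finite P" and Bp: "B > 0" and cp: "\<And>q. q \<in> P \<Longrightarrow> cost q > 0"
    using pb by (auto simp: pb_instance_def)
  define g0 where "g0 = (1/2) * (total_cost cost T / (MAX t\<in>T. cost t) - 1)"
  define C where "C = total_cost cost T"
  define M where "M = (MAX t\<in>T. cost t)"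
  obtain b t where r: "phrag_reach N P B cost A W b t" and out:
    "(\<exists>p. phrag_next N P cost A W b t p \<and> total_cost cost (insert p W) > B) \<or> (\<forall>q. \<not> phrag_candidate N P A W q)"
    using assms(2) unfolding phragmen_outcome_def by blast
  note Ib = inv_basic[OF pb r]
  have I1: "W \<subseteq> P" using Ib by (rule conjunct1)
  note Ib3 = Ib[THEN conjunct2, THEN conjunct2]
  have I3: "\<And>i. 0 \<le> b i" "\<And>i. b i \<le> t" using Ib3[THEN conjunct1] by auto
  note Ib4 = Ib3[THEN conjunct2]
  have I5: "\<And>i. W \<inter> A i = {} \<Longrightarrow> b i = t" using Ib4[THEN conjunct1] by auto
  have I6: "\<And>q. phrag_candidate N P A W q \<Longrightarrow> (\<Sum>i\<in>approvers N A q. b i) \<le> cost q"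
    using Ib4[THEN conjunct2, THEN conjunct1] by auto
  have I7: "(\<Sum>i\<in>N. b i) = real (card N) * t - total_cost cost W"
    using Ib4[THEN conjunct2, THEN conjunct2] .
  have fW: "finite W" using I1 fP finite_subset by auto
  have fT: "finite T" using assms(3) fP finite_subset by auto
  have Cpos: "C > 0" unfolding C_def total_cost_def
    using fT assms(3,4) cp by (intro sum_pos) auto
  have key: "min (real (card T)) g0 \<le> avg_sat A W V" if coh: "cohesive N B cost A T V" for V
  proof -
    have VN: "V \<subseteq> N" and TA: "\<And>i. i \<in> V \<Longrightarrow> T \<subseteq> A i"
      and ratio: "C / B \<le> real (card V) / real (card N)"
      using coh by (auto simp: cohesive_def C_def)
    have fV: "finite V" using VN fN finite_subset by auto
    have v0: "real (card V) > 0"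
    proof (rule ccontr)
      assume "\<not> real (card V) > 0"
      then have "real (card V) = 0" by simp
      then have "C / B \<le> 0" using ratio by simp
      moreover have "C / B > 0" using Cpos Bp by simp
      ultimately show False by simp
    qed
    have Vne: "V \<noteq> {}" using v0 by auto
    show ?thesis
    proof (cases "T \<subseteq> W")
      case True
      have "(\<Sum>i\<in>V. real (card T)) \<le> (\<Sum>i\<in>V. real (card (W \<inter> A i)))"
      proof (rule sum_mono)
        fix i assume "i \<in> V"
        then have "T \<subseteq> W \<inter> A i" using True TA by auto
        then show "real (card T) \<le> real (card (W \<inter> A i))" using fW by (simp add: card_mono)
      qed
      then have "real (card V) * real (card T) \<le> (\<Sum>i\<in>V. real (card (W \<inter> A i)))" by simp
      then have "real (card T) \<le> avg_sat A W V" unfolding avg_sat_def using v0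
        by (simp add: le_divide_eq mult.commute)
      then show ?thesis by linarith
    next
      case False
      then obtain t0 where t0T: "t0 \<in> T" and t0W: "t0 \<notin> W" by auto
      have t0P: "t0 \<in> P" using t0T assms(3) by auto
      have Vsub: "V \<subseteq> approvers N A t0" using VN TA t0T by (auto simp: approvers_def)
      have fa: "finite (approvers N A t0)" using fN by (simp add: approvers_def)
      have ane: "approvers N A t0 \<noteq> {}" using Vsub Vne by auto
      have c0: "phrag_candidate N P A W t0" using t0P t0W ane by (simp add: phrag_candidate_def)
      then obtain ps where nx: "phrag_next N P cost A W b t ps" and ov: "total_cost cost (insert ps W) > B"
        using out by blast
      have candp: "phrag_candidate N P A W ps" and mn: "\<And>q. phrag_candidate N P A W q \<Longrightarrow>
         phrag_time N cost A b t ps \<le> phrag_time N cost A b t q" using nx by (auto simp: phrag_next_def)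
      have psW: "ps \<notin> W" and psne: "approvers N A ps \<noteq> {}" using candp by (auto simp: phrag_candidate_def)
      have fap: "finite (approvers N A ps)" "approvers N A ps \<subseteq> N" using fN by (auto simp: approvers_def)
      define d where "d = phrag_time N cost A b t ps - t"
      have dd: "d = max 0 ((cost ps - (\<Sum>i\<in>approvers N A ps. b i)) / real (card (approvers N A ps)))"
        by (simp add: d_def phrag_time_def)
      have d0: "0 \<le> d" using dd by simp
      define TT where "TT = t + d"
      define bb where "bb = (\<lambda>i. b i + d)"
      define v where "v = real (card V)"
      define c where "c = cost t0"
      have cpos: "c > 0" using cp t0P by (simp add: c_def)
      have sumN: "(\<Sum>i\<in>N. bb i) = real (card N) * TT - total_cost cost W"
        unfolding bb_def TT_def using sum_shift[OF fN, of b d] I7 by (simp add: algebra_simps)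
      have payp: "(\<Sum>i\<in>approvers N A ps. bb i) = cost ps"
        unfolding bb_def dd by (rule time_eq[OF fap(1) psne I6[OF candp]])
      have "(\<Sum>i\<in>approvers N A ps. bb i) \<le> (\<Sum>i\<in>N. bb i)"
        by (rule sum_mono2[OF fN fap(2)]) (use I3 d0 in \<open>auto simp: bb_def intro: add_nonneg_nonneg\<close>)
      moreover have "total_cost cost (insert ps W) = cost ps + total_cost cost W"
        using psW fW by (simp add: total_cost_def)
      ultimately have nTT: "real (card N) * TT > B" using sumN payp ov by linarith
      have n0: "real (card N) > 0" using nTT Bp
        by (metis mult_eq_0_iff of_nat_0_less_iff order_less_asym gr0I of_nat_0 mult_zero_left)
      have "C \<le> real (card V) / real (card N) * B" using ratio Bp by (simp add: divide_le_eq)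
      also have "\<dots> = v * (B / real (card N))" by (simp add: v_def)
      also have "\<dots> < v * TT"
        using nTT n0 v0 unfolding v_def by (intro mult_strict_left_mono) (simp_all add: divide_less_eq mult.commute)
      finally have CvT: "C < v * TT" .
      have cC: "c \<le> C" unfolding c_def C_def total_cost_def
        using fT t0T assms(3) cp by (intro member_le_sum) (auto intro: less_imp_le)
      have cM: "c \<le> M" unfolding c_def M_def using fT t0T by (intro Max_ge) auto
      have vp: "v > 0" using v0 by (simp add: v_def)
      have TTc: "TT \<ge> c / v" using CvT cC vp by (simp add: divide_le_eq mult.commute)
      have "t + d \<le> phrag_time N cost A b t t0" using mn[OF c0] by (simp add: d_def)
      then have "d \<le> max 0 ((cost t0 - (\<Sum>i\<in>approvers N A t0. b i)) / real (card (approvers N A t0)))"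
        by (simp add: phrag_time_def)
      then have "(\<Sum>i\<in>approvers N A t0. b i + d) \<le> cost t0"
        using time_le[OF fa ane I6[OF c0] d0] by simp
      moreover have "(\<Sum>i\<in>V. b i + d) \<le> (\<Sum>i\<in>approvers N A t0. b i + d)"
        by (rule sum_mono2[OF fa Vsub]) (use I3 d0 in \<open>auto intro: add_nonneg_nonneg\<close>)
      ultimately have F2': "(\<Sum>i\<in>V. b i + d) \<le> c" by (simp add: c_def)
      then have F2: "(\<Sum>i\<in>V. b i) + v * d \<le> c" using sum_shift[OF fV] by (simp add: v_def)
      have F0: "0 \<le> (\<Sum>i\<in>V. b i)" using I3 by (simp add: sum_nonneg)
      have F1: "(\<Sum>i\<in>V. b i) \<le> v * t"
        using sum_mono[of V b "\<lambda>_. t"] I3 by (simp add: v_def)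
      have IH: "(\<Sum>i\<in>V. phi A W b t i) \<le> DD v c t"
        using inv_phi[OF pb VN Vne _ t0P r] TA t0T t0W by (auto simp: v_def c_def)
      have "(\<Sum>i\<in>V. phi A W bb TT i) = (\<Sum>i\<in>V. phi A W b t i + 2*d*b i + d^2)"
        unfolding bb_def TT_def by (simp add: phi_advance)
      also have "\<dots> = (\<Sum>i\<in>V. phi A W b t i) + (2*d*(\<Sum>i\<in>V. b i) + v * d^2)"
        by (simp add: sum.distrib sum_distrib_left v_def)
      also have "\<dots> \<le> DD v c t + (DD v c (t+d) - DD v c t)"
        using IH DD_step[OF vp d0 F0 F1 F2] by linarith
      finally have H: "(\<Sum>i\<in>V. phi A W bb TT i) \<le> DD v c TT" by (simp add: TT_def)
      have S: "v * (v * TT - c) / (2*c) \<le> (\<Sum>i\<in>V. real (card (W \<inter> A i)))"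
      proof (rule final_alg[OF vp cpos fV _ TTc])
        show "real (card V) = v" by (simp add: v_def)
        show "\<And>i. i \<in> V \<Longrightarrow> 0 \<le> real (card (W \<inter> A i))" by simp
        show "\<And>i. i \<in> V \<Longrightarrow> real (card (W \<inter> A i)) = 0 \<Longrightarrow> bb i = TT"
          using I5 fW by (simp add: bb_def TT_def)
        show "(\<Sum>i\<in>V. bb i) \<le> c" using F2' by (simp add: bb_def)
        show "(\<Sum>i\<in>V. (TT - bb i)^2 / real (card (W \<inter> A i)) + (bb i)^2) \<le> DD v c TT"
          using H by (simp add: phi_def)
      qed
      have avg: "avg_sat A W V = (\<Sum>i\<in>V. real (card (W \<inter> A i))) / v"
        by (simp add: avg_sat_def v_def)
      have "(v * TT - c) / (2*c) \<le> avg_sat A W V"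
        unfolding avg using S vp by (simp add: le_divide_eq mult.commute)
      moreover have "(v * TT - c) / (2*c) = (1/2) * (v * TT / c - 1)" using cpos by (simp add: field_simps)
      moreover have "C / M \<le> v * TT / c"
      proof -
        have "C / M \<le> C / c" using Cpos cpos cM by (intro divide_left_mono) auto
        also have "\<dots> \<le> v * TT / c" using CvT cpos by (intro divide_right_mono) auto
        finally show ?thesis .
      qed
      then have "(1/2) * (C / M - 1) \<le> (1/2) * (v * TT / c - 1)" by (intro mult_left_mono) auto
      ultimately have "g0 \<le> avg_sat A W V" unfolding g0_def C_def[symmetric] M_def[symmetric] by linarith
      then show ?thesis by linarith
    qed
  qed
  have "g0 \<in> {g::real. \<forall>V. cohesive N B cost A T V \<longrightarrow> avg_sat A W V \<ge> min (real (card T)) g}"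
    using key by auto
  then have "ereal g0 \<le> prop_degree N B cost A W T" unfolding prop_degree_def by (rule SUP_upper)
  then show ?thesis by (simp add: g0_def)
qed

end
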